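(* Consider an instance of VCPNEW on $G=(V,E)$ with data $c,q^1,q^2$, and let MWVCP-EQV be the minimum weight vertex cover instance on $G$ with vertex weights $c'_i=c_i+\sum_{j:(i,j)\in E}(q^2_{ij}-q^1_{ij})$. For a vertex cover $P$ write $\phi(P)=\sum_{i\in P}c'_i$, let $P^o$ be an optimal vertex cover for MWVCP-EQV with $\phi(P^o)>0$, and set $\delta=\frac{\sum_{(i,j)\in E}(2q^1_{ij}-q^2_{ij})}{\phi(P^o)}$. Suppose $\sum_{(i,j)\in E}(2q^1_{ij}-q^2_{ij})\ge0$ and $c'_i\ge0$ for all $i\in V$. If $P^*$ is an $\epsilon$-approximate vertex cover for MWVCP-EQV, then $P^*$ is a $\frac{\epsilon+\delta}{1+\delta}$-approximate vertex cover for VCPNEW.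
   Context: A vertex cover of $G$ is a set $P\subseteq V$ containing at least one endpoint of every edge. For $P\subseteq V$, $E_1(P)$ is the set of edges with exactly one endpoint in $P$ and $E_2(P)$ the set of edges with both endpoints in $P$. VCPNEW is to find a vertex cover $P$ minimizing $f(P)=\sum_{i\in P}c_i+\sum_{(i,j)\in E_1(P)}q^1_{ij}+\sum_{(i,j)\in E_2(P)}q^2_{ij}$. A feasible solution $P^*$ of a minimization problem with optimal value $OPT$ is $\epsilon$-approximate if its objective value is at most $\epsilon\cdot OPT$. *)

theory Defs
  imports Complex_Main
begin

(* Simple graph G = (V, E): V finite vertex set, E a set of unordered edges {i,j},
   each a 2-element subset of V. Edge data q1, q2 are indexed by edges. *)

definition is_vc :: "'a set \<Rightarrow> 'a set set \<Rightarrow> 'a set \<Rightarrow> bool" where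
  "is_vc V E P \<longleftrightarrow> P \<subseteq> V \<and> (\<forall>e\<in>E. e \<inter> P \<noteq> {})"

definition vcs :: "'a set \<Rightarrow> 'a set set \<Rightarrow> 'a set set" where
  "vcs V E = {P. is_vc V E P}"

definition E1 :: "'a set set \<Rightarrow> 'a set \<Rightarrow> 'a set set" where
  "E1 E P = {e\<in>E. card (e \<inter> P) = 1}"

definition E2 :: "'a set set \<Rightarrow> 'a set \<Rightarrow> 'a set set" where
  "E2 E P = {e\<in>E. e \<subseteq> P}"

definition vcp_obj :: "'a set set \<Rightarrow> ('a \<Rightarrow> real) \<Rightarrow> ('a set \<Rightarrow> real) \<Rightarrow> ('a set \<Rightarrow> real)
    \<Rightarrow> 'a set \<Rightarrow> real" where
  "vcp_obj E c q1 q2 P = (\<Sum>i\<in>P. c i) + (\<Sum>e\<in>E1 E P. q1 e) + (\<Sum>e\<in>E2 E P. q2 e)"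

definition eqv_weight :: "'a set set \<Rightarrow> ('a \<Rightarrow> real) \<Rightarrow> ('a set \<Rightarrow> real) \<Rightarrow> ('a set \<Rightarrow> real)
    \<Rightarrow> 'a \<Rightarrow> real" where
  "eqv_weight E c q1 q2 i = c i + (\<Sum>e\<in>{e\<in>E. i \<in> e}. q2 e - q1 e)"

definition eqv_obj :: "'a set set \<Rightarrow> ('a \<Rightarrow> real) \<Rightarrow> ('a set \<Rightarrow> real) \<Rightarrow> ('a set \<Rightarrow> real)
    \<Rightarrow> 'a set \<Rightarrow> real" where
  "eqv_obj E c q1 q2 P = (\<Sum>i\<in>P. eqv_weight E c q1 q2 i)"

definition eps_approx :: "'b set \<Rightarrow> ('b \<Rightarrow> real) \<Rightarrow> real \<Rightarrow> 'b \<Rightarrow> bool" where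
  "eps_approx S obj eps P \<longleftrightarrow> P \<in> S \<and> obj P \<le> eps * Min (obj ` S)"

end

theory Submission
  imports Defs
begin

lemma key:
  assumes fin: "finite V"
    and edges: "\<forall>e\<in>E. e \<subseteq> V \<and> card e = 2"
    and vc: "is_vc V E P"
  shows "vcp_obj E c q1 q2 P = eqv_obj E c q1 q2 P + (\<Sum>e\<in>E. 2 * q1 e - q2 e)"
proof -
  have finE: "finite E" using edges fin
    by (meson PowI finite_Pow_iff finite_subset subsetI)
  have PV: "P \<subseteq> V" and cov: "\<forall>e\<in>E. e \<inter> P \<noteq> {}" using vc by (auto simp: is_vc_def)
  have finP: "finite P" using PV fin finite_subset by blast
  have sw: "(\<Sum>i\<in>P. \<Sum>e\<in>{e\<in>E. i \<in> e}. q2 e - q1 e)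
      = (\<Sum>e\<in>E. \<Sum>i\<in>{i\<in>P. i \<in> e}. q2 e - q1 e)"
    using sum.swap_restrict[OF finP finE, of "\<lambda>i e. q2 e - q1 e" "\<lambda>i e. i \<in> e"] by simp
  also have "\<dots> = (\<Sum>e\<in>E. real (card (e \<inter> P)) * (q2 e - q1 e))"
  proof (rule sum.cong[OF refl])
    fix e assume "e \<in> E"
    have "{i\<in>P. i \<in> e} = e \<inter> P" by blast
    then show "(\<Sum>i\<in>{i\<in>P. i \<in> e}. q2 e - q1 e) = real (card (e \<inter> P)) * (q2 e - q1 e)"
      by simp
  qed
  finally have phi: "eqv_obj E c q1 q2 P = (\<Sum>i\<in>P. c i) + (\<Sum>e\<in>E. real (card (e \<inter> P)) * (q2 e - q1 e))"
    unfolding eqv_obj_def eqv_weight_def by (simp add: sum.distrib)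
  have s1: "(\<Sum>e\<in>E1 E P. q1 e) = (\<Sum>e\<in>E. if card (e \<inter> P) = 1 then q1 e else 0)"
    unfolding E1_def using finE by (simp add: sum.inter_filter)
  have s2: "(\<Sum>e\<in>E2 E P. q2 e) = (\<Sum>e\<in>E. if e \<subseteq> P then q2 e else 0)"
    unfolding E2_def using finE by (simp add: sum.inter_filter)
  have pt: "(if card (e \<inter> P) = 1 then q1 e else 0) + (if e \<subseteq> P then q2 e else 0)
      = real (card (e \<inter> P)) * (q2 e - q1 e) + (2 * q1 e - q2 e)" if "e \<in> E" for e
  proof -
    have c2: "card e = 2" and fe: "finite e" using edges that card.infinite by fastforce+
    have ne: "e \<inter> P \<noteq> {}" using cov that by blast
    have pos: "card (e \<inter> P) \<ge> 1" using ne fe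
      by (metis One_nat_def Suc_leI card_gt_0_iff finite_Int)
    have le: "card (e \<inter> P) \<le> 2" using card_mono[OF fe, of "e \<inter> P"] c2 by auto
    have iff: "e \<subseteq> P \<longleftrightarrow> card (e \<inter> P) = 2"
    proof
      assume "e \<subseteq> P" then have "e \<inter> P = e" by blast
      then show "card (e \<inter> P) = 2" using c2 by simp
    next
      assume "card (e \<inter> P) = 2"
      then have "e \<inter> P = e" using card_subset_eq[OF fe, of "e \<inter> P"] c2 by auto
      then show "e \<subseteq> P" by blast
    qed
    show ?thesis
    proof (cases "card (e \<inter> P) = 1")
      case True then show ?thesis using iff by simp
    next
      case False then have "card (e \<inter> P) = 2" using pos le by linarith
      then show ?thesis using iff by simp
    qed
  qed
  have "(\<Sum>e\<in>E1 E P. q1 e) + (\<Sum>e\<in>E2 E P. q2 e)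
      = (\<Sum>e\<in>E. real (card (e \<inter> P)) * (q2 e - q1 e)) + (\<Sum>e\<in>E. 2 * q1 e - q2 e)"
    unfolding s1 s2 sum.distrib[symmetric] using pt by (intro sum.cong) auto
  then show ?thesis unfolding vcp_obj_def phi by simp
qed

theorem lemma4:
  fixes V :: "'a set" and E :: "'a set set"
    and c :: "'a \<Rightarrow> real" and q1 q2 :: "'a set \<Rightarrow> real"
    and Po Pstar :: "'a set" and eps :: real
  assumes "finite V"
    and "\<forall>e\<in>E. e \<subseteq> V \<and> card e = 2"
    and "is_vc V E Po"
    and "\<forall>Q. is_vc V E Q \<longrightarrow> eqv_obj E c q1 q2 Po \<le> eqv_obj E c q1 q2 Q"
    and "eqv_obj E c q1 q2 Po > 0"
    and "(\<Sum>e\<in>E. 2 * q1 e - q2 e) \<ge> 0"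
    and "\<forall>i\<in>V. eqv_weight E c q1 q2 i \<ge> 0"
    and "eps_approx (vcs V E) (eqv_obj E c q1 q2) eps Pstar"
  shows "let \<delta> = (\<Sum>e\<in>E. 2 * q1 e - q2 e) / eqv_obj E c q1 q2 Po
         in eps_approx (vcs V E) (vcp_obj E c q1 q2) ((eps + \<delta>) / (1 + \<delta>)) Pstar"
proof -
  define K where "K = (\<Sum>e\<in>E. 2 * q1 e - q2 e)"
  define p where "p = eqv_obj E c q1 q2 Po"
  have finS: "finite (vcs V E)"
  proof (rule finite_subset)
    show "vcs V E \<subseteq> Pow V" by (auto simp: vcs_def is_vc_def)
  qed (use assms(1) in simp)
  have PoS: "Po \<in> vcs V E" using assms(3) by (simp add: vcs_def)
  have Ps: "Pstar \<in> vcs V E" and Pb: "eqv_obj E c q1 q2 Pstar \<le> eps * Min (eqv_obj E c q1 q2 ` vcs V E)"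
    using assms(8) by (auto simp: eps_approx_def)
  have m1: "Min (eqv_obj E c q1 q2 ` vcs V E) = p"
    unfolding p_def using finS PoS assms(4) by (intro Min_eqI) (auto simp: vcs_def)
  have kQ: "\<And>Q. Q \<in> vcs V E \<Longrightarrow> vcp_obj E c q1 q2 Q = eqv_obj E c q1 q2 Q + K"
    unfolding K_def using key[OF assms(1,2)] by (auto simp: vcs_def)
  have m2: "Min (vcp_obj E c q1 q2 ` vcs V E) = p + K"
    using finS PoS kQ assms(4) unfolding p_def by (intro Min_eqI) (auto simp: vcs_def)
  have pp: "p > 0" using assms(5) p_def by simp
  have K0: "K \<ge> 0" using assms(6) K_def by simp
  have "vcp_obj E c q1 q2 Pstar \<le> eps * p + K" using kQ[OF Ps] Pb m1 by simp
  also have "eps * p + K = (eps + K / p) / (1 + K / p) * (p + K)"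
  proof -
    have e1: "1 + K / p = (p + K) / p" using pp by (simp add: field_simps)
    have e2: "eps + K / p = (eps * p + K) / p" using pp by (simp add: field_simps)
    have "p + K > 0" using pp K0 by simp
    then show ?thesis unfolding e1 e2 using pp by simp
  qed
  finally show ?thesis unfolding Let_def eps_approx_def m2 using Ps K_def p_def by simp
qed

end
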